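(* Let $R$ be a ring with identity and $(S,\leq)$ a strictly ordered monoid which is quasitotally ordered, and suppose $R$ is $S$-Armendariz. Let $A=R[[S]]$ be the ring of generalized power series. Then $A$ is a generalized right Baer ring if and only if $R$ is a generalized right Baer ring; and $A$ is a generalized right quasi-Baer ring if and only if $R$ is a generalized right quasi-Baer ring.
   Context: All rings are associative with identity. For a nonempty subset $X$ of a ring $R$, $r_R(X)=\{a\in R : xa=0 \text{ for all } x\in X\}$, and for a positive integer $n$, $X^n$ denotes the set of all products $a_1\cdots a_n$ with $a_i\in X$. A ring $R$ is generalized right Baer if for every nonempty subset $X$ of $R$ there exist a positive integer $n$ and an idempotent $e\in R$ with $r_R(X^n)=eR$; it is generalized right quasi-Baer if for every right ideal $I$ of $R$ there exist a positive integer $n$ and an idempotent $e\in R$ with $r_R(I^n)=eR$. An ordered monoid $(S,\leq)$ is a monoid with a partial order such that $u\le v$ implies $ut\le vt$ and $tu\le tv$; it is strictly ordered if $u<v$ implies $ut<vt$ and $tu<tv$ for all $t\in S$; it is quasitotally ordered if $\leq$ can be refined to an order $\preceq$ making $S$ a strictly totally ordered monoid. A subset of $S$ is artinian if every strictly decreasing sequence in it is finite, and narrow if every set of pairwise incomparable elements in it is finite. The ring of generalized power series $R[[S]]$ is the set of maps $f:S\to R$ with artinian and narrow support $\{s: f(s)\ne0\}$, with pointwise addition and multiplication $(fg)(s)=\sum_{uv=s} f(u)g(v)$ (the sum is finite over pairs with $f(u)\neq0\neq g(v)$). $R$ is $S$-Armendariz if whenever $f,g\in R[[S]]$ satisfy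 $fg=0$, then $f(u)g(v)=0$ for all $u,v\in S$. *)

theory Defs
  imports "HOL-Algebra.Ring" "HOL-Algebra.AbelCoset"
begin

definition ordered_monoid :: "('b::{monoid_mult,order}) itself \<Rightarrow> bool" where
  "ordered_monoid _ \<longleftrightarrow>
     (\<forall>u v t :: 'b. u \<le> v \<longrightarrow> u * t \<le> v * t \<and> t * u \<le> t * v)"

definition strictly_ordered_monoid :: "('b::{monoid_mult,order}) itself \<Rightarrow> bool" where
  "strictly_ordered_monoid T \<longleftrightarrow> ordered_monoid T \<and>
     (\<forall>u v t :: 'b. u < v \<longrightarrow> u * t < v * t \<and> t * u < t * v)"

definition strictly_totally_ordered_monoid_rel :: "('b::monoid_mult \<Rightarrow> 'b \<Rightarrow> bool) \<Rightarrow> bool" where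
  "strictly_totally_ordered_monoid_rel P \<longleftrightarrow>
     (\<forall>x. P x x) \<and> (\<forall>x y. P x y \<and> P y x \<longrightarrow> x = y) \<and>
     (\<forall>x y z. P x y \<and> P y z \<longrightarrow> P x z) \<and>
     (\<forall>x y. P x y \<or> P y x) \<and>
     (\<forall>u v t. P u v \<longrightarrow> P (u * t) (v * t) \<and> P (t * u) (t * v)) \<and>
     (\<forall>u v t. P u v \<and> u \<noteq> v \<longrightarrow>
        (P (u * t) (v * t) \<and> u * t \<noteq> v * t) \<and> (P (t * u) (t * v) \<and> t * u \<noteq> t * v))"

definition quasitotally_ordered :: "('b::{monoid_mult,order}) itself \<Rightarrow> bool" where
  "quasitotally_ordered _ \<longleftrightarrow>
     (\<exists>P :: 'b \<Rightarrow> 'b \<Rightarrow> bool. (\<forall>u v. u \<le> v \<longrightarrow> P u v) \<and> strictly_totally_ordered_monoid_rel P)"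

definition artinian_set :: "('b::order) set \<Rightarrow> bool" where
  "artinian_set X \<longleftrightarrow> \<not> (\<exists>f :: nat \<Rightarrow> 'b. \<forall>i. f i \<in> X \<and> f (Suc i) < f i)"

definition narrow_set :: "('b::order) set \<Rightarrow> bool" where
  "narrow_set X \<longleftrightarrow> (\<forall>Y \<subseteq> X. (\<forall>x\<in>Y. \<forall>y\<in>Y. x \<noteq> y \<longrightarrow> \<not> x \<le> y \<and> \<not> y \<le> x) \<longrightarrow> finite Y)"

definition gps_support :: "('b \<Rightarrow> 'a::zero) \<Rightarrow> 'b set" where
  "gps_support f = {s. f s \<noteq> 0}"

definition gps_carrier :: "(('b::{monoid_mult,order}) \<Rightarrow> ('a::ring_1)) set" where
  "gps_carrier = {f. artinian_set (gps_support f) \<and> narrow_set (gps_support f)}"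

definition gps_mult :: "(('b::{monoid_mult,order}) \<Rightarrow> ('a::ring_1)) \<Rightarrow> ('b \<Rightarrow> 'a) \<Rightarrow> 'b \<Rightarrow> 'a" where
  "gps_mult f g s = (\<Sum>(u, v) \<in> {(u, v). u * v = s \<and> f u \<noteq> 0 \<and> g v \<noteq> 0}. f u * g v)"

definition gps_ring :: "(('b::{monoid_mult,order}) \<Rightarrow> ('a::ring_1)) ring" where
  "gps_ring = \<lparr> carrier = gps_carrier, monoid.mult = gps_mult,
     one = (\<lambda>s. if s = 1 then 1 else 0), zero = (\<lambda>s. 0), add = (\<lambda>f g s. f s + g s) \<rparr>"

definition type_ring :: "('a::ring_1) ring" where
  "type_ring = \<lparr> carrier = UNIV, monoid.mult = (*), one = 1, zero = 0, add = (+) \<rparr>"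

definition S_Armendariz :: "('b::{monoid_mult,order}) itself \<Rightarrow> ('a::ring_1) itself \<Rightarrow> bool" where
  "S_Armendariz _ _ \<longleftrightarrow>
     (\<forall>f \<in> (gps_carrier :: ('b \<Rightarrow> 'a) set). \<forall>g \<in> gps_carrier.
        gps_mult f g = (\<lambda>s. 0) \<longrightarrow> (\<forall>u v. f u * g v = 0))"

definition r_ann :: "('a, 'm) ring_scheme \<Rightarrow> 'a set \<Rightarrow> 'a set" where
  "r_ann R X = {a \<in> carrier R. \<forall>x\<in>X. x \<otimes>\<^bsub>R\<^esub> a = \<zero>\<^bsub>R\<^esub>}"

text \<open>X^n = set of all products a_1 ... a_n with a_i in X (used for n >= 1).\<close>
fun set_pow :: "('a, 'm) ring_scheme \<Rightarrow> 'a set \<Rightarrow> nat \<Rightarrow> 'a set" where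
  "set_pow R X 0 = {\<one>\<^bsub>R\<^esub>}"
| "set_pow R X (Suc 0) = X"
| "set_pow R X (Suc (Suc n)) = {a \<otimes>\<^bsub>R\<^esub> b | a b. a \<in> set_pow R X (Suc n) \<and> b \<in> X}"

definition right_ideal :: "'a set \<Rightarrow> ('a, 'm) ring_scheme \<Rightarrow> bool" where
  "right_ideal I R \<longleftrightarrow> additive_subgroup I R \<and>
     (\<forall>x\<in>I. \<forall>r\<in>carrier R. x \<otimes>\<^bsub>R\<^esub> r \<in> I)"

definition gen_right_Baer :: "('a, 'm) ring_scheme \<Rightarrow> bool" where
  "gen_right_Baer R \<longleftrightarrow>
     (\<forall>X. X \<subseteq> carrier R \<and> X \<noteq> {} \<longrightarrow>
        (\<exists>n::nat. n > 0 \<and> (\<exists>e\<in>carrier R. e \<otimes>\<^bsub>R\<^esub> e = e \<and>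
           r_ann R (set_pow R X n) = {e \<otimes>\<^bsub>R\<^esub> a | a. a \<in> carrier R})))"

definition gen_right_quasi_Baer :: "('a, 'm) ring_scheme \<Rightarrow> bool" where
  "gen_right_quasi_Baer R \<longleftrightarrow>
     (\<forall>I. right_ideal I R \<longrightarrow>
        (\<exists>n::nat. n > 0 \<and> (\<exists>e\<in>carrier R. e \<otimes>\<^bsub>R\<^esub> e = e \<and>
           r_ann R (set_pow R I n) = {e \<otimes>\<^bsub>R\<^esub> a | a. a \<in> carrier R})))"

end

theory Submission
  imports Defs "HOL-Library.Ramsey" "HOL-Library.Infinite_Set"
begin


definition pwo :: "'b::order set \<Rightarrow> bool" where
  "pwo A \<longleftrightarrow> (\<forall>(x::nat \<Rightarrow> 'b) Z. infinite Z \<longrightarrow> x ` Z \<subseteq> A \<longrightarrow>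
     (\<exists>Y\<subseteq>Z. infinite Y \<and> (\<forall>i\<in>Y. \<forall>j\<in>Y. i < j \<longrightarrow> x i \<le> x j)))"

lemma pwo_subset: "pwo B \<Longrightarrow> A \<subseteq> B \<Longrightarrow> pwo A"
  unfolding pwo_def by (metis subset_trans)

lemma two_elems: "infinite (Y::nat set) \<Longrightarrow> \<exists>i\<in>Y. \<exists>j\<in>Y. i < j"
proof -
  assume Y: "infinite Y"
  then obtain i where i: "i \<in> Y" using infinite_imp_nonempty by blast
  have "infinite (Y - {..i})" using Y by simp
  then obtain j where "j \<in> Y - {..i}" using infinite_imp_nonempty by blast
  then have "j \<in> Y" "i < j" by auto
  then show ?thesis using i by blast
qed

lemma pwo_finite: "finite A \<Longrightarrow> pwo A"
  unfolding pwo_def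
proof (intro allI impI)
  fix x :: "nat \<Rightarrow> 'a" and Z :: "nat set"
  assume A: "finite A" and Z: "infinite Z" and xZ: "x ` Z \<subseteq> A"
  have eq: "Z = (\<Union>a\<in>x ` Z. {i\<in>Z. x i = a})" by auto
  have fin: "finite (x ` Z)" by (rule finite_subset[OF xZ A])
  have "\<exists>a. infinite {i\<in>Z. x i = a}"
  proof (rule ccontr)
    assume "\<not> ?thesis"
    then have allfin: "\<forall>a. finite {i\<in>Z. x i = a}" by blast
    have "finite (\<Union>a\<in>x ` Z. {i\<in>Z. x i = a})"
      apply (rule finite_UN_I[OF fin]) using allfin by blast
    then show False using Z eq by simp
  qed
  then obtain a where "infinite {i\<in>Z. x i = a}" by blast
  then show "\<exists>Y\<subseteq>Z. infinite Y \<and> (\<forall>i\<in>Y. \<forall>j\<in>Y. i < j \<longrightarrow> x i \<le> x j)"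
    by (intro exI[of _ "{i\<in>Z. x i = a}"]) auto
qed

lemma pwo_D: fixes x :: "nat \<Rightarrow> 'a::order" assumes "pwo A" "infinite Z" "x ` Z \<subseteq> A" shows
   "\<exists>Y\<subseteq>Z. infinite Y \<and> (\<forall>i\<in>Y. \<forall>j\<in>Y. i < j \<longrightarrow> x i \<le> x j)"
  using assms(1)[unfolded pwo_def, rule_format, OF assms(2,3)] .

lemma pwo_I: assumes P: "\<And>(x::nat \<Rightarrow> 'a::order) Z. infinite Z \<Longrightarrow> x ` Z \<subseteq> A \<Longrightarrow>
   \<exists>Y\<subseteq>Z. infinite Y \<and> (\<forall>i\<in>Y. \<forall>j\<in>Y. i < j \<longrightarrow> x i \<le> x j)" shows "pwo A"
  unfolding pwo_def
proof (intro allI impI)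
  fix x :: "nat \<Rightarrow> 'a" and Z assume "infinite Z" "x ` Z \<subseteq> A"
  then show "\<exists>Y\<subseteq>Z. infinite Y \<and> (\<forall>i\<in>Y. \<forall>j\<in>Y. i < j \<longrightarrow> x i \<le> x j)" by (rule P)
qed

lemma pwo_Un: 
  assumes pA: "pwo A" and pB: "pwo B" shows "pwo (A \<union> B)"
proof (rule pwo_I)
  fix x :: "nat \<Rightarrow> 'a" and Z :: "nat set"
  assume Z: "infinite Z" and xZ: "x ` Z \<subseteq> A \<union> B"
  have "Z = {i\<in>Z. x i \<in> A} \<union> {i\<in>Z. x i \<in> B}" using xZ by auto
  then have "infinite {i\<in>Z. x i \<in> A} \<or> infinite {i\<in>Z. x i \<in> B}" using Z
    by (metis finite_Un)
  then show "\<exists>Y\<subseteq>Z. infinite Y \<and> (\<forall>i\<in>Y. \<forall>j\<in>Y. i < j \<longrightarrow> x i \<le> x j)"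
  proof
    assume inf: "infinite {i\<in>Z. x i \<in> A}"
    have "x ` {i\<in>Z. x i \<in> A} \<subseteq> A" by auto
    from pwo_D[OF pA inf this] obtain Y where "Y \<subseteq> {i\<in>Z. x i \<in> A}" "infinite Y" "\<forall>i\<in>Y. \<forall>j\<in>Y. i < j \<longrightarrow> x i \<le> x j"
      by blast
    then show ?thesis by blast
  next
    assume inf: "infinite {i\<in>Z. x i \<in> B}"
    have "x ` {i\<in>Z. x i \<in> B} \<subseteq> B" by auto
    from pwo_D[OF pB inf this] obtain Y where "Y \<subseteq> {i\<in>Z. x i \<in> B}" "infinite Y" "\<forall>i\<in>Y. \<forall>j\<in>Y. i < j \<longrightarrow> x i \<le> x j"
      by blast
    then show ?thesis by blast
  qed
qed

lemma dec_chain: assumes d: "\<And>i. f (Suc i) < (f i :: 'b::order)" shows "i < j \<Longrightarrow> f j < f i"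
proof (induction j)
  case 0 then show ?case by simp
next
  case (Suc j)
  show ?case
  proof (cases "i = j")
    case True then show ?thesis using d by simp
  next
    case False
    then have "i < j" using Suc.prems by simp
    then have "f j < f i" by (rule Suc.IH)
    with d[of j] show ?thesis by (rule order.strict_trans)
  qed
qed

lemma pwo_imp_an: "pwo A \<Longrightarrow> artinian_set A \<and> narrow_set A"
proof
  assume p: "pwo A"
  show "artinian_set A"
    unfolding artinian_set_def
  proof
    assume "\<exists>f. \<forall>i. f i \<in> A \<and> f (Suc i) < f i"
    then obtain f where f1: "\<And>i. f i \<in> A" and f2: "\<And>i. f (Suc i) < f i" by blast
    have "f ` UNIV \<subseteq> A" using f1 by auto
    from pwo_D[OF p infinite_UNIV_nat this] obtain Y where
      Y: "infinite Y" "\<forall>i\<in>Y. \<forall>j\<in>Y. i < j \<longrightarrow> f i \<le> f j" by blast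
    obtain i j where ij: "i \<in> Y" "j \<in> Y" "i < j" using two_elems[OF Y(1)] by blast
    have "f i \<le> f j" using Y(2) ij by blast
    moreover have "f j < f i" using dec_chain[of f, OF f2 ij(3)] .
    ultimately show False by simp
  qed
  show "narrow_set A"
    unfolding narrow_set_def
  proof (intro allI impI, rule ccontr)
    fix Y' assume Y': "Y' \<subseteq> A" "\<forall>x\<in>Y'. \<forall>y\<in>Y'. x \<noteq> y \<longrightarrow> \<not> x \<le> y \<and> \<not> y \<le> x" "infinite Y'"
    obtain x :: "nat \<Rightarrow> _" where x: "inj x" "range x \<subseteq> Y'"
      using infinite_countable_subset[OF Y'(3)] by blast
    have "x ` UNIV \<subseteq> A" using x(2) Y'(1) by blast
    from pwo_D[OF p infinite_UNIV_nat this] obtain Y where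
      Y: "infinite Y" "\<forall>i\<in>Y. \<forall>j\<in>Y. i < j \<longrightarrow> x i \<le> x j" by blast
    obtain i j where ij: "i \<in> Y" "j \<in> Y" "i < j" using two_elems[OF Y(1)] by blast
    have le: "x i \<le> x j" using Y(2) ij by blast
    have "x i \<noteq> x j" using x(1) ij(3) by (simp add: inj_eq)
    moreover have "x i \<in> Y'" "x j \<in> Y'" using x(2) by auto
    ultimately show False using Y'(2) le by blast
  qed
qed

lemma col0: "(if (a::'a::order) \<le> b then 0 else if b < a then 1 else 2) = (t::nat) \<Longrightarrow> t = 0 \<Longrightarrow> a \<le> b"
  by (cases "a \<le> b") (auto split: if_split_asm)

lemma col1: "(if (a::'a::order) \<le> b then 0 else if b < a then 1 else 2) = (t::nat) \<Longrightarrow> t = 1 \<Longrightarrow> b < a"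
  by (cases "a \<le> b"; cases "b < a") auto

lemma col2: "(if (a::'a::order) \<le> b then 0 else if b < a then 1 else 2) = (t::nat) \<Longrightarrow> t = 2 \<Longrightarrow> \<not> a \<le> b \<and> \<not> b \<le> a"
  by (cases "a \<le> b"; cases "b < a") (auto simp: less_le_not_le)

lemma an_imp_pwo:
  assumes art: "artinian_set A" and nar: "narrow_set A"
  shows "pwo A"
proof (rule pwo_I)
  fix x :: "nat \<Rightarrow> 'a" and Z :: "nat set"
  assume Z: "infinite Z" and xZ: "x ` Z \<subseteq> A"
  define col :: "nat set \<Rightarrow> nat" where
    "col X = (if x (Min X) \<le> x (Max X) then 0 else if x (Max X) < x (Min X) then 1 else 2)" for X
  have "\<forall>i\<in>Z. \<forall>j\<in>Z. i \<noteq> j \<longrightarrow> col {i, j} < 3" by (simp add: col_def)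
  from Ramsey2[OF Z this] obtain Y t where Y: "Y \<subseteq> Z" "infinite Y" "t < 3"
    "\<forall>i\<in>Y. \<forall>j\<in>Y. i \<noteq> j \<longrightarrow> col {i, j} = t" by blast
  have colij: "col {i, j} = (if x i \<le> x j then 0 else if x j < x i then 1 else 2)" if "i < j" for i j
    using that by (simp add: col_def min_def max_def)
  have colt: "(if x i \<le> x j then 0 else if x j < x i then 1 else 2) = t" if "i \<in> Y" "j \<in> Y" "i < j" for i j
  proof -
    have "col {i,j} = t" using Y(4) that by simp
    then show ?thesis using colij[OF that(3)] by simp
  qed
  consider "t = 0" | "t = 1" | "t = 2" using Y(3) by linarith
  then show "\<exists>Y\<subseteq>Z. infinite Y \<and> (\<forall>i\<in>Y. \<forall>j\<in>Y. i < j \<longrightarrow> x i \<le> x j)"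
  proof cases
    case 1
    have "\<forall>i\<in>Y. \<forall>j\<in>Y. i < j \<longrightarrow> x i \<le> x j"
    proof (intro ballI impI)
      fix i j assume ij: "i \<in> Y" "j \<in> Y" "i < j"
      show "x i \<le> x j" by (rule col0[OF colt[OF ij] 1])
    qed
    then show ?thesis using Y by blast
  next
    case 2
    define e where "e = enumerate Y"
    have sm: "strict_mono e" using Y(2) by (simp add: e_def strict_mono_enumerate)
    have eY: "e n \<in> Y" for n using Y(2) by (simp add: e_def enumerate_in_set)
    have dec: "x (e (Suc n)) < x (e n)" for n
    proof -
      have "e n < e (Suc n)" using sm by (simp add: strict_mono_def)
      from col1[OF colt[OF eY eY this] 2] show ?thesis .
    qed
    have inA: "x (e n) \<in> A" for n using eY Y(1) xZ by blast
    have "\<exists>f. \<forall>i. f i \<in> A \<and> f (Suc i) < f i"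
      by (rule exI[of _ "\<lambda>n. x (e n)"]) (simp add: inA dec)
    then show ?thesis using art unfolding artinian_set_def by blast
  next
    case 3
    have inc0: "\<not> x i \<le> x j \<and> \<not> x j \<le> x i" if "i \<in> Y" "j \<in> Y" "i < j" for i j
      by (rule col2[OF colt[OF that] 3])
    have inc: "\<not> x i \<le> x j" if "i \<in> Y" "j \<in> Y" "i \<noteq> j" for i j
    proof (cases "i < j")
      case True
      then show ?thesis using inc0[OF that(1,2) True] by blast
    next
      case False
      then have "j < i" using that by linarith
      then show ?thesis using inc0[OF that(2,1)] by blast
    qed
    have "inj_on x Y"
    proof (rule inj_onI)
      fix i j assume "i \<in> Y" "j \<in> Y" "x i = x j"
      then show "i = j" using inc[of i j] by (cases "i = j") auto
    qed
    then have inf: "infinite (x ` Y)" using Y(2) finite_imageD by auto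
    have anti: "\<forall>a\<in>x ` Y. \<forall>b\<in>x ` Y. a \<noteq> b \<longrightarrow> \<not> a \<le> b \<and> \<not> b \<le> a"
    proof (intro ballI impI)
      fix a b assume "a \<in> x ` Y" "b \<in> x ` Y" "a \<noteq> b"
      then obtain i j where ij: "i \<in> Y" "j \<in> Y" "a = x i" "b = x j" by blast
      then have "i \<noteq> j" using \<open>a \<noteq> b\<close> by auto
      then show "\<not> a \<le> b \<and> \<not> b \<le> a" using inc[OF ij(1,2)] inc[OF ij(2,1)] ij(3,4) by auto
    qed
    have sub: "x ` Y \<subseteq> A" using Y(1) xZ by blast
    have N: "\<forall>Y'\<subseteq>A. (\<forall>a\<in>Y'. \<forall>b\<in>Y'. a \<noteq> b \<longrightarrow> \<not> a \<le> b \<and> \<not> b \<le> a) \<longrightarrow> finite Y'"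
      using nar by (simp only: narrow_set_def)
    have "finite (x ` Y)" using mp[OF mp[OF spec[OF N, of "x ` Y"] sub] anti] .
    then show ?thesis using inf by blast
  qed
qed

lemma carrier_pwo: "f \<in> gps_carrier \<longleftrightarrow> pwo (gps_support f)"
  unfolding gps_carrier_def using an_imp_pwo pwo_imp_an by blast



definition setmul :: "'b::monoid_mult set \<Rightarrow> 'b set \<Rightarrow> 'b set" where
  "setmul A B = {u * v | u v. u \<in> A \<and> v \<in> B}"

lemma pwo_pair:
  fixes a :: "nat \<Rightarrow> 'c::order" and b :: "nat \<Rightarrow> 'd::order"
  assumes pA: "pwo A" and pB: "pwo B" and Z: "infinite Z" and aZ: "a ` Z \<subseteq> A" and bZ: "b ` Z \<subseteq> B"
  shows "\<exists>Y\<subseteq>Z. infinite Y \<and> (\<forall>i\<in>Y. \<forall>j\<in>Y. i<j \<longrightarrow> a i \<le> a j \<and> b i \<le> b j)"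
proof -
  obtain Y1 where Y1: "Y1 \<subseteq> Z" "infinite Y1" "\<forall>i\<in>Y1. \<forall>j\<in>Y1. i<j \<longrightarrow> a i \<le> a j"
    using pwo_D[OF pA Z aZ] by blast
  have bY1: "b ` Y1 \<subseteq> B" using Y1(1) bZ by blast
  obtain Y2 where Y2: "Y2 \<subseteq> Y1" "infinite Y2" "\<forall>i\<in>Y2. \<forall>j\<in>Y2. i<j \<longrightarrow> b i \<le> b j"
    using pwo_D[OF pB Y1(2) bY1] by blast
  have "\<forall>i\<in>Y2. \<forall>j\<in>Y2. i<j \<longrightarrow> a i \<le> a j \<and> b i \<le> b j"
  proof (intro ballI impI)
    fix i j assume "i \<in> Y2" "j \<in> Y2" "i < j"
    then show "a i \<le> a j \<and> b i \<le> b j" using Y1(3) Y2(1,3) by blast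
  qed
  moreover have "Y2 \<subseteq> Z" using Y1(1) Y2(1) by blast
  ultimately show ?thesis using Y2(2) by blast
qed

lemma M_eq_sum:
  fixes f g :: "'b::{monoid_mult,order} \<Rightarrow> 'a::ring_1"
  assumes "finite T" "{(u,v). u*v = s \<and> f u \<noteq> 0 \<and> g v \<noteq> 0} \<subseteq> T" "T \<subseteq> {(u,v). u*v = s}"
  shows "gps_mult f g s = (\<Sum>(u,v)\<in>T. f u * g v)"
  unfolding gps_mult_def
  by (rule sum.mono_neutral_left[OF assms(1,2)]) (use assms(3) in auto)

lemma M_nz:
  fixes f g :: "'b::{monoid_mult,order} \<Rightarrow> 'a::ring_1"
  assumes "gps_mult f g s \<noteq> 0" shows "\<exists>u v. u*v=s \<and> f u \<noteq> 0 \<and> g v \<noteq> 0"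
proof (rule ccontr)
  assume "\<not> ?thesis"
  then have emp: "{(u, v). u * v = s \<and> f u \<noteq> 0 \<and> g v \<noteq> 0} = {}" by auto
  have "gps_mult f g s = 0" by (simp only: gps_mult_def emp sum.empty)
  then show False using assms by simp
qed

lemma supp_M:
  fixes f g :: "'b::{monoid_mult,order} \<Rightarrow> 'a::ring_1"
  shows "gps_support (gps_mult f g) \<subseteq> setmul (gps_support f) (gps_support g)"
proof
  fix s assume "s \<in> gps_support (gps_mult f g)"
  then have "gps_mult f g s \<noteq> 0" by (simp add: gps_support_def)
  from M_nz[OF this] obtain u v where "u*v = s" "f u \<noteq> 0" "g v \<noteq> 0" by blast
  then show "s \<in> setmul (gps_support f) (gps_support g)"
    unfolding setmul_def gps_support_def by blast
qed

definition gc :: "'a::ring_1 \<Rightarrow> 'b::{monoid_mult,order} \<Rightarrow> 'a" where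
  "gc c = (\<lambda>s. if s = 1 then c else 0)"

lemma gc_carrier: "(gc c :: 'b::{monoid_mult,order} \<Rightarrow> 'a::ring_1) \<in> gps_carrier"
proof -
  have "gps_support (gc c :: 'b \<Rightarrow> 'a) \<subseteq> {1}" by (auto simp: gps_support_def gc_def split: if_splits)
  then show ?thesis unfolding carrier_pwo by (rule pwo_subset[OF pwo_finite, rotated]) simp
qed

lemma M_gc_left:
  fixes g :: "'b::{monoid_mult,order} \<Rightarrow> 'a::ring_1"
  shows "gps_mult (gc c) g = (\<lambda>s. c * g s)"
proof
  fix s
  have "gps_mult (gc c) g s = (\<Sum>(u,v)\<in>{(1::'b,s)}. gc c u * g v)"
    by (rule M_eq_sum[where T="{(1,s)}" and f="gc c" and g=g and s=s]) (auto simp: gc_def split: if_splits)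
  then show "gps_mult (gc c) g s = c * g s" by (simp add: gc_def)
qed

lemma M_gc_right:
  fixes f :: "'b::{monoid_mult,order} \<Rightarrow> 'a::ring_1"
  shows "gps_mult f (gc c) = (\<lambda>s. f s * c)"
proof
  fix s
  have "gps_mult f (gc c) s = (\<Sum>(u,v)\<in>{(s,1::'b)}. f u * gc c v)"
    by (rule M_eq_sum[where T="{(s,1)}" and f=f and g="gc c" and s=s]) (auto simp: gc_def split: if_splits)
  then show "gps_mult f (gc c) s = f s * c" by (simp add: gc_def)
qed

lemma gc_mult: "gps_mult (gc a) (gc b :: 'b::{monoid_mult,order} \<Rightarrow> 'a::ring_1) = gc (a * b)"
  unfolding M_gc_left by (auto simp: gc_def fun_eq_iff)

lemma gc_zero: "gc 0 = (\<lambda>_. 0)"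
  by (rule ext) (simp add: gc_def)

lemma M_zero_left: "gps_mult (\<lambda>_. 0) (g :: 'b::{monoid_mult,order} \<Rightarrow> 'a::ring_1) = (\<lambda>_. 0)"
  by (rule ext) (simp add: gps_mult_def)

lemma gps_ring_simps:
  "carrier (gps_ring :: ('b::{monoid_mult,order} \<Rightarrow> 'a::ring_1) ring) = gps_carrier"
  "monoid.mult (gps_ring :: ('b \<Rightarrow> 'a) ring) = gps_mult"
  "one (gps_ring :: ('b \<Rightarrow> 'a) ring) = gc 1"
  "zero (gps_ring :: ('b \<Rightarrow> 'a) ring) = (\<lambda>s. 0)"
  "add (gps_ring :: ('b \<Rightarrow> 'a) ring) = (\<lambda>f g s. f s + g s)"
  by (simp_all add: gps_ring_def gc_def fun_eq_iff)

lemma type_ring_simps: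
  "carrier (type_ring :: ('a::ring_1) ring) = UNIV"
  "monoid.mult (type_ring :: 'a ring) = (*)"
  "one (type_ring :: 'a ring) = 1"
  "zero (type_ring :: 'a ring) = 0"
  "add (type_ring :: 'a ring) = (+)"
  by (simp_all add: type_ring_def)

context
  assumes SOM: "strictly_ordered_monoid TYPE('b::{monoid_mult,order})"
begin

lemma mono_r: "(u::'b) \<le> v \<Longrightarrow> u * t \<le> v * t"
  using SOM unfolding strictly_ordered_monoid_def ordered_monoid_def by blast
lemma mono_l: "(u::'b) \<le> v \<Longrightarrow> t * u \<le> t * v"
  using SOM unfolding strictly_ordered_monoid_def ordered_monoid_def by blast
lemma smono_r: "(u::'b) < v \<Longrightarrow> u * t < v * t"
  using SOM unfolding strictly_ordered_monoid_def by blast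
lemma smono_l: "(u::'b) < v \<Longrightarrow> t * u < t * v"
  using SOM unfolding strictly_ordered_monoid_def by blast

lemma pwo_setmul:
  assumes pA: "pwo (A::'b set)" and pB: "pwo B" shows "pwo (setmul A B)"
proof (rule pwo_I)
  fix x :: "nat \<Rightarrow> 'b" and Z :: "nat set"
  assume Z: "infinite Z" and xZ: "x ` Z \<subseteq> setmul A B"
  have "\<forall>i\<in>Z. \<exists>p. fst p \<in> A \<and> snd p \<in> B \<and> x i = fst p * snd p"
  proof
    fix i assume "i \<in> Z"
    then have "x i \<in> setmul A B" using xZ by blast
    then obtain u v where "u \<in> A" "v \<in> B" "x i = u * v" unfolding setmul_def by blast
    then show "\<exists>p. fst p \<in> A \<and> snd p \<in> B \<and> x i = fst p * snd p" by (intro exI[of _ "(u,v)"]) simp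
  qed
  from bchoice[OF this] obtain p where p: "\<forall>i\<in>Z. fst (p i) \<in> A \<and> snd (p i) \<in> B \<and> x i = fst (p i) * snd (p i)"
    by blast
  have "(\<lambda>i. fst (p i)) ` Z \<subseteq> A" "(\<lambda>i. snd (p i)) ` Z \<subseteq> B" using p by auto
  from pwo_pair[OF pA pB Z this] obtain Y where Y: "Y \<subseteq> Z" "infinite Y"
    "\<forall>i\<in>Y. \<forall>j\<in>Y. i<j \<longrightarrow> fst (p i) \<le> fst (p j) \<and> snd (p i) \<le> snd (p j)" by blast
  have "\<forall>i\<in>Y. \<forall>j\<in>Y. i<j \<longrightarrow> x i \<le> x j"
  proof (intro ballI impI)
    fix i j assume ij: "i \<in> Y" "j \<in> Y" "i < j"
    then have le: "fst (p i) \<le> fst (p j)" "snd (p i) \<le> snd (p j)" using Y(3) by auto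
    have xi: "x i = fst (p i) * snd (p i)" and xj: "x j = fst (p j) * snd (p j)"
      using p ij Y(1) by auto
    have "fst (p i) * snd (p i) \<le> fst (p j) * snd (p i)" using mono_r[OF le(1)] .
    also have "\<dots> \<le> fst (p j) * snd (p j)" using mono_l[OF le(2)] .
    finally show "x i \<le> x j" using xi xj by simp
  qed
  then show "\<exists>Y\<subseteq>Z. infinite Y \<and> (\<forall>i\<in>Y. \<forall>j\<in>Y. i < j \<longrightarrow> x i \<le> x j)" using Y by blast
qed

lemma finite_pairs:
  assumes pA: "pwo (A::'b set)" and pB: "pwo B"
  shows "finite {(u,v). u \<in> A \<and> v \<in> B \<and> u*v = s}"
proof (rule ccontr)
  let ?T = "{(u,v). u \<in> A \<and> v \<in> B \<and> u*v = s}"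
  assume "infinite ?T"
  then obtain p :: "nat \<Rightarrow> 'b \<times> 'b" where p: "inj p" "range p \<subseteq> ?T"
    using infinite_countable_subset by blast
  have "(\<lambda>i. fst (p i)) ` UNIV \<subseteq> A" "(\<lambda>i. snd (p i)) ` UNIV \<subseteq> B" using p(2) by auto
  from pwo_pair[OF pA pB infinite_UNIV_nat this] obtain Y where Y: "infinite Y"
    "\<forall>i\<in>Y. \<forall>j\<in>Y. i<j \<longrightarrow> fst (p i) \<le> fst (p j) \<and> snd (p i) \<le> snd (p j)" by blast
  obtain i j where ij: "i\<in>Y" "j\<in>Y" "i<j" using two_elems[OF Y(1)] by blast
  obtain a b where pi: "p i = (a,b)" by fastforce
  obtain c d where pj: "p j = (c,d)" by fastforce
  have "fst (p i) \<le> fst (p j) \<and> snd (p i) \<le> snd (p j)" using Y(2) ij by blast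
  then have le: "a \<le> c" "b \<le> d" using pi pj by simp_all
  have "p i \<noteq> p j" using p(1) ij(3) by (simp add: inj_eq)
  then have ne: "(a,b) \<noteq> (c,d)" using pi pj by simp
  have "p i \<in> ?T" "p j \<in> ?T" by (rule subsetD[OF p(2) rangeI])+
  then have s1: "a*b = s" "c*d = s" using pi pj by auto
  show False
  proof (cases "a = c")
    case True
    then have "b < d" using ne le by auto
    then have "a*b < a*d" by (rule smono_l)
    then show False using s1 True by simp
  next
    case False
    then have "a < c" using le by auto
    then have "a*b < c*b" by (rule smono_r)
    also have "c*b \<le> c*d" using le(2) by (rule mono_l)
    finally show False using s1 by simp
  qed
qed

lemma M_closed:
  fixes f g :: "'b \<Rightarrow> 'a::ring_1"
  assumes "f \<in> gps_carrier" "g \<in> gps_carrier"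
  shows "gps_mult f g \<in> gps_carrier"
proof -
  have "pwo (gps_support f)" "pwo (gps_support g)" using assms carrier_pwo by blast+
  then have "pwo (setmul (gps_support f) (gps_support g))" by (rule pwo_setmul)
  then have "pwo (gps_support (gps_mult f g))" by (rule pwo_subset[OF _ supp_M])
  then show ?thesis by (simp add: carrier_pwo)
qed

end



context
  assumes SOM: "strictly_ordered_monoid TYPE('b::{monoid_mult,order})"
begin

lemma M_triple_L:
  fixes f g h :: "'b \<Rightarrow> 'a::ring_1"
  assumes f: "f \<in> gps_carrier" and g: "g \<in> gps_carrier" and h: "h \<in> gps_carrier"
  shows "gps_mult (gps_mult f g) h s = (\<Sum>(u,v,w) \<in> {(u,v,w). u \<in> gps_support f \<and> v \<in> gps_support g \<and> w \<in> gps_support h \<and> u*v*w = s}. f u * g v * h w)"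
proof -
  define A where "A = gps_support f"
  define B where "B = gps_support g"
  define C where "C = gps_support h"
  have pA: "pwo A" "pwo B" "pwo C" using f g h by (simp_all add: carrier_pwo A_def B_def C_def)
  define T1 where "T1 = {(x,w). x \<in> setmul A B \<and> w \<in> C \<and> x*w = s}"
  define Q where "Q x = {(u,v). u \<in> A \<and> v \<in> B \<and> u*v = x}" for x
  have fT1: "finite T1" unfolding T1_def by (rule finite_pairs[OF SOM pwo_setmul[OF SOM pA(1,2)] pA(3)])
  have fQ: "finite (Q x)" for x unfolding Q_def by (rule finite_pairs[OF SOM pA(1,2)])
  have "gps_mult (gps_mult f g) h s = (\<Sum>(x,w)\<in>T1. gps_mult f g x * h w)"
  proof (rule M_eq_sum[OF fT1])
    show "{(x,w). x*w = s \<and> gps_mult f g x \<noteq> 0 \<and> h w \<noteq> 0} \<subseteq> T1"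
    proof
      fix p assume "p \<in> {(x,w). x*w = s \<and> gps_mult f g x \<noteq> 0 \<and> h w \<noteq> 0}"
      then obtain x w where p: "p = (x,w)" "x*w = s" "gps_mult f g x \<noteq> 0" "h w \<noteq> 0" by blast
      have "x \<in> gps_support (gps_mult f g)" using p(3) by (simp add: gps_support_def)
      then have "x \<in> setmul A B" using supp_M unfolding A_def B_def by blast
      then show "p \<in> T1" using p unfolding T1_def C_def gps_support_def by simp
    qed
    show "T1 \<subseteq> {(x,w). x*w = s}" unfolding T1_def by auto
  qed
  also have "\<dots> = (\<Sum>p\<in>T1. \<Sum>q\<in>Q (fst p). f (fst q) * g (snd q) * h (snd p))"
  proof (rule sum.cong[OF refl])
    fix p assume "p \<in> T1"
    have "gps_mult f g (fst p) = (\<Sum>(u,v)\<in>Q (fst p). f u * g v)"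
      by (rule M_eq_sum[OF fQ]) (auto simp: Q_def A_def B_def gps_support_def)
    then show "(case p of (x,w) \<Rightarrow> gps_mult f g x * h w) = (\<Sum>q\<in>Q (fst p). f (fst q) * g (snd q) * h (snd p))"
      by (simp add: sum_distrib_right split_def)
  qed
  also have "\<dots> = (\<Sum>(p,q)\<in>Sigma T1 (\<lambda>p. Q (fst p)). f (fst q) * g (snd q) * h (snd p))"
    by (rule sum.Sigma[OF fT1]) (simp add: fQ)
  also have "\<dots> = (\<Sum>(u,v,w) \<in> {(u,v,w). u \<in> A \<and> v \<in> B \<and> w \<in> C \<and> u*v*w = s}. f u * g v * h w)"
    by (rule sum.reindex_bij_witness[where i="\<lambda>(u,v,w). ((u*v,w),(u,v))" and j="\<lambda>((x,w),(u,v)). (u,v,w)"])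
      (auto simp: T1_def Q_def setmul_def)
  finally show ?thesis by (simp add: A_def B_def C_def)
qed

lemma M_triple_R:
  fixes f g h :: "'b \<Rightarrow> 'a::ring_1"
  assumes f: "f \<in> gps_carrier" and g: "g \<in> gps_carrier" and h: "h \<in> gps_carrier"
  shows "gps_mult f (gps_mult g h) s = (\<Sum>(u,v,w) \<in> {(u,v,w). u \<in> gps_support f \<and> v \<in> gps_support g \<and> w \<in> gps_support h \<and> u*v*w = s}. f u * g v * h w)"
proof -
  define A where "A = gps_support f"
  define B where "B = gps_support g"
  define C where "C = gps_support h"
  have pA: "pwo A" "pwo B" "pwo C" using f g h by (simp_all add: carrier_pwo A_def B_def C_def)
  define T1 where "T1 = {(u,y). u \<in> A \<and> y \<in> setmul B C \<and> u*y = s}"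
  define Q where "Q y = {(v,w). v \<in> B \<and> w \<in> C \<and> v*w = y}" for y
  have fT1: "finite T1" unfolding T1_def by (rule finite_pairs[OF SOM pA(1) pwo_setmul[OF SOM pA(2,3)]])
  have fQ: "finite (Q x)" for x unfolding Q_def by (rule finite_pairs[OF SOM pA(2,3)])
  have "gps_mult f (gps_mult g h) s = (\<Sum>(u,y)\<in>T1. f u * gps_mult g h y)"
  proof (rule M_eq_sum[OF fT1])
    show "{(u,y). u*y = s \<and> f u \<noteq> 0 \<and> gps_mult g h y \<noteq> 0} \<subseteq> T1"
    proof
      fix p assume "p \<in> {(u,y). u*y = s \<and> f u \<noteq> 0 \<and> gps_mult g h y \<noteq> 0}"
      then obtain u y where p: "p = (u,y)" "u*y = s" "f u \<noteq> 0" "gps_mult g h y \<noteq> 0" by blast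
      have "y \<in> gps_support (gps_mult g h)" using p(4) by (simp add: gps_support_def)
      then have "y \<in> setmul B C" using supp_M unfolding B_def C_def by blast
      then show "p \<in> T1" using p unfolding T1_def A_def gps_support_def by simp
    qed
    show "T1 \<subseteq> {(u,y). u*y = s}" unfolding T1_def by auto
  qed
  also have "\<dots> = (\<Sum>p\<in>T1. \<Sum>q\<in>Q (snd p). f (fst p) * (g (fst q) * h (snd q)))"
  proof (rule sum.cong[OF refl])
    fix p assume "p \<in> T1"
    have "gps_mult g h (snd p) = (\<Sum>(v,w)\<in>Q (snd p). g v * h w)"
      by (rule M_eq_sum[OF fQ]) (auto simp: Q_def B_def C_def gps_support_def)
    then show "(case p of (u,y) \<Rightarrow> f u * gps_mult g h y) = (\<Sum>q\<in>Q (snd p). f (fst p) * (g (fst q) * h (snd q)))"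
      by (simp add: sum_distrib_left split_def)
  qed
  also have "\<dots> = (\<Sum>(p,q)\<in>Sigma T1 (\<lambda>p. Q (snd p)). f (fst p) * (g (fst q) * h (snd q)))"
    by (rule sum.Sigma[OF fT1]) (simp add: fQ)
  also have "\<dots> = (\<Sum>(u,v,w) \<in> {(u,v,w). u \<in> A \<and> v \<in> B \<and> w \<in> C \<and> u*v*w = s}. f u * g v * h w)"
    by (rule sum.reindex_bij_witness[where i="\<lambda>(u,v,w). ((u,v*w),(v,w))" and j="\<lambda>((u,y),(v,w)). (u,v,w)"])
      (auto simp: T1_def Q_def setmul_def mult.assoc)
  finally show ?thesis by (simp add: A_def B_def C_def)
qed

lemma M_assoc:
  fixes f g h :: "'b \<Rightarrow> 'a::ring_1"
  assumes f: "f \<in> gps_carrier" and g: "g \<in> gps_carrier" and h: "h \<in> gps_carrier"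
  shows "gps_mult (gps_mult f g) h = gps_mult f (gps_mult g h)"
  by (rule ext) (simp only: M_triple_L[OF f g h] M_triple_R[OF f g h])

lemma idem_const:
  fixes e :: "'b \<Rightarrow> 'a::ring_1"
  assumes Arm: "S_Armendariz TYPE('b) TYPE('a)" and e: "e \<in> gps_carrier" and ee: "gps_mult e e = e"
  shows "e = gc (e 1)"
proof -
  define d where "d = (\<lambda>s. gc 1 s - e s)"
  have dsupp: "gps_support d \<subseteq> gps_support e \<union> {1}" by (auto simp: d_def gc_def gps_support_def)
  have pe: "pwo (gps_support e)" using e carrier_pwo by blast
  have pE: "pwo (gps_support e \<union> {1})" by (rule pwo_Un[OF pe pwo_finite]) simp
  have d: "d \<in> gps_carrier" unfolding carrier_pwo by (rule pwo_subset[OF pE dsupp])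
  have ed: "gps_mult e d = (\<lambda>s. 0)"
  proof
    fix s
    define T where "T = {(u,v). u \<in> gps_support e \<and> v \<in> gps_support e \<union> {1} \<and> u*v = s}"
    have fT: "finite T" unfolding T_def by (rule finite_pairs[OF SOM pe pE])
    have 1: "gps_mult e d s = (\<Sum>(u,v)\<in>T. e u * d v)"
      by (rule M_eq_sum[OF fT]) (auto simp: T_def d_def gc_def gps_support_def split: if_splits)
    have 2: "(\<Sum>(u,v)\<in>T. e u * d v) = (\<Sum>(u,v)\<in>T. e u * gc 1 v) - (\<Sum>(u,v)\<in>T. e u * e v)"
      by (simp add: d_def right_diff_distrib sum_subtractf split_def)
    have 3: "(\<Sum>(u,v)\<in>T. e u * gc 1 v) = gps_mult e (gc 1) s"
      by (rule M_eq_sum[OF fT, symmetric]) (auto simp: T_def gc_def gps_support_def split: if_splits)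
    have 4: "(\<Sum>(u,v)\<in>T. e u * e v) = gps_mult e e s"
      by (rule M_eq_sum[OF fT, symmetric]) (auto simp: T_def gps_support_def)
    show "gps_mult e d s = 0" using 1 2 3 4 ee by (simp add: M_gc_right)
  qed
  have de: "gps_mult d e = (\<lambda>s. 0)"
  proof
    fix s
    define T where "T = {(u,v). u \<in> gps_support e \<union> {1} \<and> v \<in> gps_support e \<and> u*v = s}"
    have fT: "finite T" unfolding T_def by (rule finite_pairs[OF SOM pE pe])
    have 1: "gps_mult d e s = (\<Sum>(u,v)\<in>T. d u * e v)"
      by (rule M_eq_sum[OF fT]) (auto simp: T_def d_def gc_def gps_support_def split: if_splits)
    have 2: "(\<Sum>(u,v)\<in>T. d u * e v) = (\<Sum>(u,v)\<in>T. gc 1 u * e v) - (\<Sum>(u,v)\<in>T. e u * e v)"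
      by (simp add: d_def left_diff_distrib sum_subtractf split_def)
    have 3: "(\<Sum>(u,v)\<in>T. gc 1 u * e v) = gps_mult (gc 1) e s"
      by (rule M_eq_sum[OF fT, symmetric]) (auto simp: T_def gc_def gps_support_def split: if_splits)
    have 4: "(\<Sum>(u,v)\<in>T. e u * e v) = gps_mult e e s"
      by (rule M_eq_sum[OF fT, symmetric]) (auto simp: T_def gps_support_def)
    show "gps_mult d e s = 0" using 1 2 3 4 ee by (simp add: M_gc_left)
  qed
  have A1: "e u * d v = 0" for u v using Arm e d ed unfolding S_Armendariz_def by blast
  have A2: "d u * e v = 0" for u v using Arm d e de unfolding S_Armendariz_def by blast
  show "e = gc (e 1)"
  proof
    fix s show "e s = gc (e 1) s"
    proof (cases "s = 1")
      case True then show ?thesis by (simp add: gc_def)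
    next
      case False
      have ds: "d s = - e s" using False by (simp add: d_def gc_def)
      have ee0: "e s * e v = 0" for v using A2[of s v] ds by simp
      have "e s * d 1 = 0" by (rule A1)
      then have "e s - e s * e 1 = 0" by (simp add: d_def gc_def right_diff_distrib)
      then have "e s = 0" using ee0[of 1] by simp
      then show ?thesis using False by (simp add: gc_def)
    qed
  qed
qed

end



inductive_set aclos :: "'a::ring_1 set \<Rightarrow> 'a set" for C where
  aclos_zero: "0 \<in> aclos C"
| aclos_base: "c \<in> C \<Longrightarrow> c \<in> aclos C"
| aclos_add: "x \<in> aclos C \<Longrightarrow> y \<in> aclos C \<Longrightarrow> x + y \<in> aclos C"
| aclos_neg: "x \<in> aclos C \<Longrightarrow> - x \<in> aclos C"

lemma pow_mono: "X \<subseteq> Y \<Longrightarrow> set_pow R X (Suc n) \<subseteq> set_pow R Y (Suc n)"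
  by (induction n) auto

lemma inv_type: "m_inv (add_monoid (type_ring :: ('a::ring_1) ring)) x = - x"
  unfolding m_inv_def
  by (rule the_equality) (auto simp: type_ring_def eq_neg_iff_add_eq_0)

lemma a_inv_type: "a_inv (type_ring :: ('a::ring_1) ring) x = - x"
  unfolding a_inv_def by (rule inv_type)

lemma addsub_typeI:
  assumes "0 \<in> J" "\<forall>x\<in>J. \<forall>y\<in>J. x + y \<in> J" "\<forall>x\<in>J. - x \<in> J"
  shows "additive_subgroup J (type_ring :: ('a::ring_1) ring)"
proof (rule additive_subgroupI, rule subgroup.intro)
  show "J \<subseteq> carrier (add_monoid (type_ring :: 'a ring))" by (simp add: type_ring_def)
  show "\<And>x y. x \<in> J \<Longrightarrow> y \<in> J \<Longrightarrow> x \<otimes>\<^bsub>add_monoid (type_ring :: 'a ring)\<^esub> y \<in> J"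
    using assms(2) by (simp add: type_ring_def)
  show "\<one>\<^bsub>add_monoid (type_ring :: 'a ring)\<^esub> \<in> J"
    using assms(1) by (simp add: type_ring_def)
  show "\<And>x. x \<in> J \<Longrightarrow> inv\<^bsub>add_monoid (type_ring :: 'a ring)\<^esub> x \<in> J"
    using assms(3) by (simp only: inv_type)
qed

lemma addsub_typeD:
  assumes "additive_subgroup J (type_ring :: ('a::ring_1) ring)"
  shows "0 \<in> J" "\<forall>x\<in>J. \<forall>y\<in>J. x + y \<in> J" "\<forall>x\<in>J. - x \<in> J"
proof -
  show "0 \<in> J" using additive_subgroup.zero_closed[OF assms] by (simp add: type_ring_simps)
  show "\<forall>x\<in>J. \<forall>y\<in>J. x + y \<in> J" using additive_subgroup.a_closed[OF assms] by (simp add: type_ring_simps)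
  show "\<forall>x\<in>J. - x \<in> J" using additive_subgroup.a_inv_closed[OF assms] by (simp only: a_inv_type) blast
qed

lemma neg_carrier: "(f :: 'b::{monoid_mult,order} \<Rightarrow> 'a::ring_1) \<in> gps_carrier \<Longrightarrow> (\<lambda>s. - f s) \<in> gps_carrier"
  by (simp add: gps_carrier_def gps_support_def)

lemma inv_gps: "(f :: 'b::{monoid_mult,order} \<Rightarrow> 'a::ring_1) \<in> gps_carrier \<Longrightarrow>
   m_inv (add_monoid (gps_ring :: ('b \<Rightarrow> 'a) ring)) f = (\<lambda>s. - f s)"
  unfolding m_inv_def
  by (rule the_equality) (auto simp: gps_ring_def neg_carrier fun_eq_iff eq_neg_iff_add_eq_0)

lemma add_carrier: "(f :: 'b::{monoid_mult,order} \<Rightarrow> 'a::ring_1) \<in> gps_carrier \<Longrightarrow> g \<in> gps_carrier \<Longrightarrow>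
   (\<lambda>s. f s + g s) \<in> gps_carrier"
proof -
  assume f: "f \<in> gps_carrier" and g: "g \<in> gps_carrier"
  have "gps_support (\<lambda>s. f s + g s) \<subseteq> gps_support f \<union> gps_support g" by (auto simp: gps_support_def)
  then show ?thesis using f g unfolding carrier_pwo by (metis pwo_Un pwo_subset)
qed

lemma addsub_gps:
  assumes "I \<subseteq> gps_carrier" "(\<lambda>s. 0) \<in> I" "\<forall>x\<in>I. \<forall>y\<in>I. (\<lambda>s. x s + y s) \<in> I" "\<forall>x\<in>I. (\<lambda>s. - x s) \<in> I"
  shows "additive_subgroup I (gps_ring :: ('b::{monoid_mult,order} \<Rightarrow> 'a::ring_1) ring)"
proof (rule additive_subgroupI, rule subgroup.intro)
  show "I \<subseteq> carrier (add_monoid (gps_ring :: ('b \<Rightarrow> 'a) ring))" using assms(1) by (simp add: gps_ring_def)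
  show "\<And>x y. x \<in> I \<Longrightarrow> y \<in> I \<Longrightarrow> x \<otimes>\<^bsub>add_monoid (gps_ring :: ('b \<Rightarrow> 'a) ring)\<^esub> y \<in> I"
    using assms(3) by (simp add: gps_ring_def)
  show "\<one>\<^bsub>add_monoid (gps_ring :: ('b \<Rightarrow> 'a) ring)\<^esub> \<in> I"
    using assms(2) by (simp add: gps_ring_def)
  fix x assume x: "x \<in> I"
  then have "inv\<^bsub>add_monoid (gps_ring :: ('b \<Rightarrow> 'a) ring)\<^esub> x = (\<lambda>s. - x s)"
    using assms(1) inv_gps by blast
  then show "inv\<^bsub>add_monoid (gps_ring :: ('b \<Rightarrow> 'a) ring)\<^esub> x \<in> I" using assms(4) x by simp
qed

lemma sum_in:
  assumes "0 \<in> J" "\<forall>x\<in>J. \<forall>y\<in>J. x + y \<in> J" "\<forall>i\<in>A. F i \<in> J"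
  shows "sum F A \<in> J"
proof (cases "finite A")
  case True
  then show ?thesis using assms(3)
    by (induction A rule: finite_induct) (auto simp: assms(1,2))
next
  case False then show ?thesis using assms(1) by simp
qed

lemma Jext:
  fixes a :: "'a::ring_1"
  shows "(\<forall>c\<in>set_pow (type_ring :: 'a ring) C (Suc n). c * a = 0) \<Longrightarrow>
     j \<in> set_pow (type_ring :: 'a ring) (aclos C) (Suc n) \<Longrightarrow> j * a = 0"
proof (induction n arbitrary: a j)
  case 0
  then have "j \<in> aclos C" "\<forall>c\<in>C. c * a = 0" by simp_all
  then show ?case
    by (induction j rule: aclos.induct) (auto simp: distrib_right)
next
  case (Suc n)
  from Suc.prems(2) obtain x y where j: "j = x * y" "x \<in> set_pow type_ring (aclos C) (Suc n)" "y \<in> aclos C"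
    by (auto simp: type_ring_simps)
  have "\<forall>c\<in>set_pow type_ring C (Suc n). c * (y * a) = 0"
    using j(3)
  proof (induction y rule: aclos.induct)
    case aclos_zero then show ?case by simp
  next
    case (aclos_base c')
    show ?case
    proof
      fix c assume c: "c \<in> set_pow type_ring C (Suc n)"
      have "c * c' \<in> set_pow type_ring C (Suc (Suc n))" using c aclos_base by (auto simp: type_ring_simps)
      then have "c * c' * a = 0" using Suc.prems(1) by blast
      then show "c * (c' * a) = 0" by (simp add: mult.assoc)
    qed
  next
    case (aclos_add x y) then show ?case by (simp add: distrib_right distrib_left)
  next
    case (aclos_neg x) then show ?case by simp
  qed
  then have "x * (y * a) = 0" using Suc.IH j(2) by blast
  then show ?case by (simp add: j(1) mult.assoc)
qed

context
  assumes SOM: "strictly_ordered_monoid TYPE('b::{monoid_mult,order})"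
begin

lemma pow_carrier:
  "X \<subseteq> gps_carrier \<Longrightarrow> set_pow (gps_ring :: ('b \<Rightarrow> 'a::ring_1) ring) X (Suc n) \<subseteq> gps_carrier"
proof (induction n)
  case 0 then show ?case by simp
next
  case (Suc n)
  show ?case
  proof
    fix z assume "z \<in> set_pow (gps_ring :: ('b \<Rightarrow> 'a::ring_1) ring) X (Suc (Suc n))"
    then obtain a b where ab: "z = gps_mult a b" "a \<in> set_pow (gps_ring :: ('b \<Rightarrow> 'a::ring_1) ring) X (Suc n)" "b \<in> X"
      by (auto simp: gps_ring_simps)
    have "a \<in> gps_carrier" using Suc ab(2) by blast
    moreover have "b \<in> gps_carrier" using Suc.prems ab(3) by blast
    ultimately show "z \<in> gps_carrier" using ab(1) M_closed[OF SOM] by blast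
  qed
qed

lemma pow_gc:
  "set_pow (gps_ring :: ('b \<Rightarrow> 'a::ring_1) ring) (gc ` X) (Suc n) = gc ` set_pow (type_ring :: 'a ring) X (Suc n)"
proof (induction n)
  case 0 then show ?case by simp
next
  case (Suc n)
  have "set_pow (gps_ring :: ('b \<Rightarrow> 'a::ring_1) ring) (gc ` X) (Suc (Suc n)) =
        {gps_mult a b | a b. a \<in> gc ` set_pow (type_ring :: 'a ring) X (Suc n) \<and> b \<in> gc ` X}"
    using Suc.IH by (simp add: gps_ring_simps)
  also have "\<dots> = gc ` {a * b | a b. a \<in> set_pow (type_ring :: 'a ring) X (Suc n) \<and> b \<in> X}"
  proof
    show "{gps_mult a b | a b. a \<in> gc ` set_pow (type_ring :: 'a ring) X (Suc n) \<and> b \<in> gc ` X}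
       \<subseteq> gc ` {a * b | a b. a \<in> set_pow (type_ring :: 'a ring) X (Suc n) \<and> b \<in> X}"
    proof
      fix z assume "z \<in> {gps_mult a b | a b. a \<in> gc ` set_pow (type_ring :: 'a ring) X (Suc n) \<and> b \<in> gc ` X}"
      then obtain a b where ab: "z = gps_mult (gc a) (gc b)" "a \<in> set_pow (type_ring :: 'a ring) X (Suc n)" "b \<in> X"
        by blast
      then have "z = gc (a * b)" by (simp add: gc_mult)
      moreover have "a * b \<in> {a * b | a b. a \<in> set_pow (type_ring :: 'a ring) X (Suc n) \<and> b \<in> X}" using ab by blast
      ultimately show "z \<in> gc ` {a * b | a b. a \<in> set_pow (type_ring :: 'a ring) X (Suc n) \<and> b \<in> X}" by blast
    qed
    show "gc ` {a * b | a b. a \<in> set_pow (type_ring :: 'a ring) X (Suc n) \<and> b \<in> X}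
       \<subseteq> {gps_mult a b | a b. a \<in> gc ` set_pow (type_ring :: 'a ring) X (Suc n) \<and> b \<in> gc ` X}"
    proof
      fix z assume "z \<in> gc ` {a * b | a b. a \<in> set_pow (type_ring :: 'a ring) X (Suc n) \<and> b \<in> X}"
      then obtain a b where "z = gc (a * b)" "a \<in> set_pow (type_ring :: 'a ring) X (Suc n)" "b \<in> X" by blast
      then show "z \<in> {gps_mult a b | a b. a \<in> gc ` set_pow (type_ring :: 'a ring) X (Suc n) \<and> b \<in> gc ` X}"
        by (metis (mono_tags, lifting) gc_mult image_eqI mem_Collect_eq)
    qed
  qed
  finally show ?case by (simp add: type_ring_simps)
qed

lemma coef_lemma:
  fixes X :: "('b \<Rightarrow> 'a::ring_1) set"
  assumes C: "\<forall>f\<in>X. \<forall>u. f u \<in> C"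
  shows "(\<forall>c\<in>set_pow (type_ring::'a ring) C (Suc n). c * a = 0) \<Longrightarrow>
    p \<in> set_pow (gps_ring::('b\<Rightarrow>'a) ring) X (Suc n) \<Longrightarrow> p s * a = 0"
proof (induction n arbitrary: a p s)
  case 0
  then show ?case using C by simp
next
  case (Suc n)
  from Suc.prems(2) obtain q f where p: "p = gps_mult q f" "q \<in> set_pow gps_ring X (Suc n)" "f \<in> X"
    by (auto simp: gps_ring_simps)
  have key: "q u * (f v * a) = 0" for u v
  proof -
    have "\<forall>c\<in>set_pow type_ring C (Suc n). c * (f v * a) = 0"
    proof
      fix c assume c: "c \<in> set_pow type_ring C (Suc n)"
      have "f v \<in> C" using C p(3) by blast
      then have "c * f v \<in> set_pow type_ring C (Suc (Suc n))" using c by (auto simp: type_ring_simps)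
      then have "c * f v * a = 0" using Suc.prems(1) by blast
      then show "c * (f v * a) = 0" by (simp add: mult.assoc)
    qed
    then show "q u * (f v * a) = 0" using Suc.IH p(2) by blast
  qed
  have "p s * a = (\<Sum>(u,v)\<in>{(u,v). u*v = s \<and> q u \<noteq> 0 \<and> f v \<noteq> 0}. q u * (f v * a))"
    by (simp add: p gps_mult_def sum_distrib_right split_def mult.assoc)
  also have "\<dots> = 0" by (simp add: key)
  finally show ?case .
qed

lemma multi_arm:
  fixes X :: "('b \<Rightarrow> 'a::ring_1) set"
  assumes Arm: "S_Armendariz TYPE('b) TYPE('a)" and XC: "X \<subseteq> gps_carrier"
  shows "g \<in> gps_carrier \<Longrightarrow> (\<forall>p\<in>set_pow (gps_ring::('b\<Rightarrow>'a) ring) X (Suc n). gps_mult p g = (\<lambda>_. 0)) \<Longrightarrow>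
    c \<in> set_pow (type_ring::'a ring) {f u | f u. f \<in> X} (Suc n) \<Longrightarrow> c * g v = 0"
proof (induction n arbitrary: g c v)
  case 0
  then obtain f u where fu: "c = f u" "f \<in> X" by auto
  then have "gps_mult f g = (\<lambda>_. 0)" using 0 by simp
  then show ?case using Arm XC fu 0(1) unfolding S_Armendariz_def by blast
next
  case (Suc n)
  from Suc.prems(3) obtain c0 f u where c: "c = c0 * f u"
      "c0 \<in> set_pow type_ring {f u |f u. f \<in> X} (Suc n)" "f \<in> X"
    by (auto simp: type_ring_simps)
  have fC: "f \<in> gps_carrier" using XC c(3) by blast
  have g': "gps_mult f g \<in> gps_carrier" using M_closed[OF SOM] fC Suc.prems(1) by blast
  have "\<forall>q\<in>set_pow gps_ring X (Suc n). gps_mult q (gps_mult f g) = (\<lambda>_. 0)"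
  proof
    fix q assume q: "q \<in> set_pow gps_ring X (Suc n)"
    have qC: "q \<in> gps_carrier" using pow_carrier[OF XC] q by blast
    have "gps_mult q f \<in> set_pow gps_ring X (Suc (Suc n))" using q c(3) by (auto simp: gps_ring_simps)
    then have "gps_mult (gps_mult q f) g = (\<lambda>_. 0)" using Suc.prems(2) by blast
    then show "gps_mult q (gps_mult f g) = (\<lambda>_. 0)" using M_assoc[OF SOM qC fC Suc.prems(1)] by simp
  qed
  then have IH: "c0 * gps_mult f g w = 0" for w using Suc.IH[OF g' _ c(2)] by blast
  define h where "h = gps_mult (gc c0) f"
  have hC: "h \<in> gps_carrier" unfolding h_def using M_closed[OF SOM] gc_carrier fC by blast
  have "gps_mult h g = (\<lambda>_. 0)" unfolding h_def
    using M_assoc[OF SOM gc_carrier fC Suc.prems(1)] IH by (simp add: M_gc_left)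
  then have "h u * g v = 0" using Arm hC Suc.prems(1) unfolding S_Armendariz_def by blast
  then show ?case by (simp add: h_def M_gc_left c(1) mult.assoc)
qed

end



lemma r_ann_gps: "r_ann (gps_ring :: ('b::{monoid_mult,order} \<Rightarrow> 'a::ring_1) ring) P = {g \<in> gps_carrier. \<forall>p\<in>P. gps_mult p g = (\<lambda>s. 0)}"
  by (simp add: r_ann_def gps_ring_simps)

lemma r_ann_type: "r_ann (type_ring :: ('a::ring_1) ring) Q = {a. \<forall>x\<in>Q. x * a = 0}"
  by (simp add: r_ann_def type_ring_simps)

lemma gc_inj: "(gc a :: 'b::{monoid_mult,order} \<Rightarrow> 'a::ring_1) = gc b \<Longrightarrow> a = b"
  unfolding gc_def by (drule fun_cong[of _ _ 1]) simp

lemma zero_carrier: "((\<lambda>s. 0) :: 'b::{monoid_mult,order} \<Rightarrow> 'a::ring_1) \<in> gps_carrier"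
  using gc_carrier[of 0] by (simp add: gc_zero)

lemma set_type: "{e \<otimes>\<^bsub>(type_ring :: ('a::ring_1) ring)\<^esub> a | a. a \<in> carrier (type_ring :: 'a ring)} = {e * a | a. True}"
  by (simp add: type_ring_simps)

lemma set_gps: "{e \<otimes>\<^bsub>(gps_ring :: ('b::{monoid_mult,order} \<Rightarrow> 'a::ring_1) ring)\<^esub> a | a. a \<in> carrier (gps_ring :: ('b \<Rightarrow> 'a) ring)}
   = {gps_mult e a | a. a \<in> gps_carrier}"
  by (simp add: gps_ring_simps)

context
  assumes SOM: "strictly_ordered_monoid TYPE('b::{monoid_mult,order})"
begin

lemma A_to_R_core:
  fixes e :: "'b \<Rightarrow> 'a::ring_1" and P :: "('b \<Rightarrow> 'a) set" and Q :: "'a set"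
  assumes Arm: "S_Armendariz TYPE('b) TYPE('a)"
    and eC: "e \<in> gps_carrier" and ee: "gps_mult e e = e"
    and annA: "{g \<in> gps_carrier. \<forall>p\<in>P. gps_mult p g = (\<lambda>s. 0)} = {gps_mult e a | a. a \<in> gps_carrier}"
    and h1: "\<And>a. \<forall>x\<in>Q. x * a = 0 \<Longrightarrow> \<forall>p\<in>P. gps_mult p (gc a) = (\<lambda>s. 0)"
    and h2: "\<And>x. x \<in> Q \<Longrightarrow> gc x \<in> P"
  shows "e 1 * e 1 = e 1" and "{a. \<forall>x\<in>Q. x * a = 0} = {e 1 * a | a. True}"
proof -
  define e0 where "e0 = e 1"
  have eq: "e = gc e0" unfolding e0_def by (rule idem_const[OF SOM Arm eC ee])
  have "gc (e0 * e0) = (gc e0 :: 'b \<Rightarrow> 'a)" using ee by (simp add: eq gc_mult)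
  then have "e0 * e0 = e0" by (rule gc_inj)
  then show "e 1 * e 1 = e 1" by (simp add: e0_def)
  have eann: "e \<in> {g \<in> gps_carrier. \<forall>p\<in>P. gps_mult p g = (\<lambda>s. 0)}"
  proof -
    have "gps_mult e (gc 1) \<in> {gps_mult e a | a. a \<in> gps_carrier}" using gc_carrier by blast
    moreover have "gps_mult e (gc 1) = e" by (simp add: M_gc_right)
    ultimately show ?thesis using annA by simp
  qed
  show "{a. \<forall>x\<in>Q. x * a = 0} = {e 1 * a | a. True}"
  proof
    show "{a. \<forall>x\<in>Q. x * a = 0} \<subseteq> {e 1 * a | a. True}"
    proof
      fix a assume "a \<in> {a. \<forall>x\<in>Q. x * a = 0}"
      then have "\<forall>p\<in>P. gps_mult p (gc a) = (\<lambda>s. 0)" using h1[of a] by simp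
      then have "gc a \<in> {g \<in> gps_carrier. \<forall>p\<in>P. gps_mult p g = (\<lambda>s. 0)}" using gc_carrier by blast
      then have "gc a \<in> {gps_mult e a | a. a \<in> gps_carrier}" using annA by simp
      then obtain h where h: "gc a = gps_mult e h" by blast
      then have "gc a = (\<lambda>s. e0 * h s)" by (simp add: eq M_gc_left)
      then have "gc a (1::'b) = e0 * h 1" using fun_cong[of "gc a" "\<lambda>s. e0 * h s" "1::'b"] by simp
      then have "a = e 1 * h 1" by (simp add: gc_def e0_def)
      then show "a \<in> {e 1 * a | a. True}" by blast
    qed
    show "{e 1 * a | a. True} \<subseteq> {a. \<forall>x\<in>Q. x * a = 0}"
    proof
      fix z assume "z \<in> {e 1 * a | a. True}"
      then obtain r where z: "z = e0 * r" unfolding e0_def by blast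
      have "\<forall>x\<in>Q. x * z = 0"
      proof
        fix x assume "x \<in> Q"
        then have "gc x \<in> P" by (rule h2)
        then have "gps_mult (gc x) e = (\<lambda>s. 0)" using eann by simp
        then have "gc (x * e0) = (gc 0 :: 'b \<Rightarrow> 'a)" by (simp add: eq gc_mult gc_zero)
        then have "x * e0 = 0" by (rule gc_inj)
        then show "x * z = 0" by (simp add: z mult.assoc[symmetric])
      qed
      then show "z \<in> {a. \<forall>x\<in>Q. x * a = 0}" by blast
    qed
  qed
qed

lemma R_to_A_core:
  fixes P :: "('b \<Rightarrow> 'a::ring_1) set" and Q :: "'a set" and e0 :: 'a
  assumes PC: "P \<subseteq> gps_carrier"
    and annR: "{a. \<forall>x\<in>Q. x * a = 0} = {e0 * a | a. True}"
    and ee: "e0 * e0 = e0"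
    and h1: "\<forall>g. g \<in> gps_carrier \<longrightarrow> (\<forall>p\<in>P. gps_mult p g = (\<lambda>s. 0)) \<longrightarrow> (\<forall>v. \<forall>x\<in>Q. x * g v = 0)"
    and h2: "\<forall>p\<in>P. \<forall>s. p s * e0 = 0"
  shows "{g \<in> gps_carrier. \<forall>p\<in>P. gps_mult p g = (\<lambda>s. 0)} = {gps_mult (gc e0) a | a. a \<in> gps_carrier}"
proof
  show "{g \<in> gps_carrier. \<forall>p\<in>P. gps_mult p g = (\<lambda>s. 0)} \<subseteq> {gps_mult (gc e0) a | a. a \<in> gps_carrier}"
  proof
    fix g assume g: "g \<in> {g \<in> gps_carrier. \<forall>p\<in>P. gps_mult p g = (\<lambda>s. 0)}"
    have gv: "e0 * g v = g v" for v
    proof -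
      have gC: "g \<in> gps_carrier" and g2: "\<forall>p\<in>P. gps_mult p g = (\<lambda>s. 0)" using g by simp_all
      have H: "\<forall>v. \<forall>x\<in>Q. x * g v = 0" using mp[OF mp[OF spec[OF h1, of g] gC] g2] .
      then have "g v \<in> {a. \<forall>x\<in>Q. x * a = 0}" by simp
      then have "g v \<in> {e0 * a | a. True}" using annR by simp
      then obtain r where "g v = e0 * r" by blast
      then show ?thesis using ee by (simp add: mult.assoc[symmetric])
    qed
    have gC: "g \<in> gps_carrier" using g by simp
    have geq: "g = gps_mult (gc e0) g" by (simp add: M_gc_left gv)
    have "\<exists>a. g = gps_mult (gc e0) a \<and> a \<in> gps_carrier" by (intro exI[of _ g] conjI geq gC)
    then show "g \<in> {gps_mult (gc e0) a | a. a \<in> gps_carrier}" by (simp only: mem_Collect_eq)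
  qed
  show "{gps_mult (gc e0) a | a. a \<in> gps_carrier} \<subseteq> {g \<in> gps_carrier. \<forall>p\<in>P. gps_mult p g = (\<lambda>s. 0)}"
  proof
    fix z :: "'b \<Rightarrow> 'a" assume "z \<in> {gps_mult (gc e0) a | a. a \<in> gps_carrier}"
    then obtain h where z: "z = gps_mult (gc e0) h" "h \<in> gps_carrier" by blast
    have gcC: "(gc e0 :: 'b \<Rightarrow> 'a) \<in> gps_carrier" by (rule gc_carrier)
    have zC: "z \<in> gps_carrier" unfolding z(1) using gcC z(2) by (rule M_closed[OF SOM])
    have "\<forall>p\<in>P. gps_mult p z = (\<lambda>s. 0)"
    proof
      fix p assume p: "p \<in> P"
      have pC: "p \<in> gps_carrier" using p PC by blast
      have 1: "gps_mult p z = gps_mult (gps_mult p (gc e0)) h"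
        using M_assoc[OF SOM pC gc_carrier z(2)] z(1) by simp
      have 2: "gps_mult p (gc e0) = (\<lambda>s. 0)" using h2 p by (simp add: M_gc_right)
      show "gps_mult p z = (\<lambda>s. 0)" using 1 2 by (simp add: M_zero_left)
    qed
    then show "z \<in> {g \<in> gps_carrier. \<forall>p\<in>P. gps_mult p g = (\<lambda>s. 0)}" using zC by simp
  qed
qed

lemma baer_AR:
  assumes Arm: "S_Armendariz TYPE('b) TYPE('a::ring_1)"
    and B: "gen_right_Baer (gps_ring :: ('b \<Rightarrow> 'a) ring)"
  shows "gen_right_Baer (type_ring :: 'a ring)"
  unfolding gen_right_Baer_def
proof (intro allI impI)
  fix X :: "'a set" assume X: "X \<subseteq> carrier type_ring \<and> X \<noteq> {}"
  have I: "(gc ` X :: ('b \<Rightarrow> 'a) set) \<subseteq> carrier gps_ring \<and> gc ` X \<noteq> {}"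
    using X gc_carrier by (auto simp: gps_ring_simps)
  obtain n e where n: "n > 0" and eC: "e \<in> carrier gps_ring" and ee: "e \<otimes>\<^bsub>gps_ring\<^esub> e = e"
    and ann: "r_ann gps_ring (set_pow gps_ring (gc ` X :: ('b \<Rightarrow> 'a) set) n) = {e \<otimes>\<^bsub>gps_ring\<^esub> a | a. a \<in> carrier gps_ring}"
    using B[unfolded gen_right_Baer_def, rule_format, OF I] by blast
  obtain m where m: "n = Suc m" using n by (cases n) auto
  have eC': "e \<in> gps_carrier" using eC by (simp add: gps_ring_simps)
  have ee': "gps_mult e e = e" using ee by (simp add: gps_ring_simps)
  have annA: "{g \<in> gps_carrier. \<forall>p\<in>set_pow gps_ring (gc ` X :: ('b \<Rightarrow> 'a) set) n. gps_mult p g = (\<lambda>s. 0)}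
     = {gps_mult e a | a. a \<in> gps_carrier}"
    using ann by (simp only: r_ann_gps set_gps)
  have PQ: "set_pow gps_ring (gc ` X :: ('b \<Rightarrow> 'a) set) n = gc ` set_pow type_ring X n"
    unfolding m by (rule pow_gc[OF SOM])
  have h1: "\<forall>p\<in>set_pow gps_ring (gc ` X :: ('b \<Rightarrow> 'a) set) n. gps_mult p (gc a) = (\<lambda>s. 0)"
    if "\<forall>x\<in>set_pow type_ring X n. x * a = 0" for a
  proof
    fix p assume "p \<in> set_pow gps_ring (gc ` X :: ('b \<Rightarrow> 'a) set) n"
    then obtain x where x: "p = gc x" "x \<in> set_pow type_ring X n" using PQ by auto
    then have "x * a = 0" using that by blast
    then show "gps_mult p (gc a) = (\<lambda>s. 0)" by (simp add: x(1) gc_mult gc_zero)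
  qed
  have h2: "gc x \<in> set_pow gps_ring (gc ` X :: ('b \<Rightarrow> 'a) set) n" if "x \<in> set_pow type_ring X n" for x
    using that PQ by simp
  note core = A_to_R_core[OF Arm eC' ee' annA h1 h2]
  show "\<exists>n>0. \<exists>e\<in>carrier type_ring. e \<otimes>\<^bsub>type_ring\<^esub> e = e \<and>
      r_ann type_ring (set_pow type_ring X n) = {e \<otimes>\<^bsub>type_ring\<^esub> a | a. a \<in> carrier type_ring}"
  proof (intro exI[of _ n] conjI bexI[of _ "e 1"])
    show "n > 0" by (rule n)
    show "e 1 \<in> carrier type_ring" by (simp add: type_ring_simps)
    show "e 1 \<otimes>\<^bsub>type_ring\<^esub> e 1 = e 1" using core(1) by (simp add: type_ring_simps)
    show "r_ann type_ring (set_pow type_ring X n) = {e 1 \<otimes>\<^bsub>type_ring\<^esub> a | a. a \<in> carrier type_ring}"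
      using core(2) by (simp only: r_ann_type set_type)
  qed
qed

lemma baer_RA:
  assumes Arm: "S_Armendariz TYPE('b) TYPE('a::ring_1)"
    and B: "gen_right_Baer (type_ring :: 'a ring)"
  shows "gen_right_Baer (gps_ring :: ('b \<Rightarrow> 'a) ring)"
  unfolding gen_right_Baer_def
proof (intro allI impI)
  fix X :: "('b \<Rightarrow> 'a) set" assume X: "X \<subseteq> carrier gps_ring \<and> X \<noteq> {}"
  have XC: "X \<subseteq> gps_carrier" using X by (simp add: gps_ring_simps)
  define C where "C = {f u | f u. f \<in> X}"
  have CX: "\<forall>f\<in>X. \<forall>u. f u \<in> C" unfolding C_def by blast
  have Cne: "C \<subseteq> carrier type_ring \<and> C \<noteq> {}" using X by (auto simp: C_def type_ring_simps)
  obtain n e0 where n: "n > 0" and ee: "e0 \<otimes>\<^bsub>type_ring\<^esub> e0 = e0"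
    and ann: "r_ann type_ring (set_pow type_ring C n) = {e0 \<otimes>\<^bsub>type_ring\<^esub> a | a. a \<in> carrier type_ring}"
    using B[unfolded gen_right_Baer_def, rule_format, OF Cne] by blast
  obtain m where m: "n = Suc m" using n by (cases n) auto
  have annR: "{a. \<forall>x\<in>set_pow type_ring C n. x * a = 0} = {e0 * a | a. True}"
    using ann by (simp only: r_ann_type set_type)
  have ee': "e0 * e0 = e0" using ee by (simp add: type_ring_simps)
  have PC: "set_pow gps_ring X n \<subseteq> gps_carrier" unfolding m by (rule pow_carrier[OF SOM XC])
  have h1: "\<forall>v. \<forall>x\<in>set_pow type_ring C n. x * g v = 0"
    if g: "g \<in> gps_carrier" "\<forall>p\<in>set_pow gps_ring X n. gps_mult p g = (\<lambda>s. 0)" for g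
  proof (intro allI ballI)
    fix v x assume x: "x \<in> set_pow type_ring C n"
    have g2: "\<forall>p\<in>set_pow gps_ring X (Suc m). gps_mult p g = (\<lambda>s. 0)" using g(2) m by simp
    have x2: "x \<in> set_pow type_ring {f u | f u. f \<in> X} (Suc m)" using x m C_def by simp
    show "x * g v = 0" by (rule multi_arm[OF SOM Arm XC g(1) g2 x2])
  qed
  have e0ann: "\<forall>c\<in>set_pow type_ring C (Suc m). c * e0 = 0"
  proof -
    have "e0 \<in> {e0 * a | a. True}" by (rule CollectI, rule exI[of _ 1]) simp
    then have "e0 \<in> {a. \<forall>x\<in>set_pow type_ring C n. x * a = 0}" using annR by simp
    then show ?thesis unfolding m by simp
  qed
  have h2: "p s * e0 = 0" if "p \<in> set_pow gps_ring X n" for p s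
  proof -
    have "p \<in> set_pow gps_ring X (Suc m)" using that m by simp
    then show ?thesis by (rule coef_lemma[OF SOM CX e0ann])
  qed
  have core: "{g \<in> gps_carrier. \<forall>p\<in>set_pow gps_ring X n. gps_mult p g = (\<lambda>s. 0)} = {gps_mult (gc e0) a | a. a \<in> gps_carrier}"
  proof -
    have H1: "\<forall>g. g \<in> gps_carrier \<longrightarrow> (\<forall>p\<in>set_pow gps_ring X n. gps_mult p g = (\<lambda>s. 0)) \<longrightarrow> (\<forall>v. \<forall>x\<in>set_pow type_ring C n. x * g v = 0)"
      using h1 by blast
    have H2: "\<forall>p\<in>set_pow gps_ring X n. \<forall>s. p s * e0 = 0" using h2 by blast
    show ?thesis by (rule R_to_A_core[OF PC annR ee' H1 H2])
  qed
  show "\<exists>n>0. \<exists>e\<in>carrier gps_ring. e \<otimes>\<^bsub>gps_ring\<^esub> e = e \<and>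
      r_ann gps_ring (set_pow gps_ring X n) = {e \<otimes>\<^bsub>gps_ring\<^esub> a | a. a \<in> carrier gps_ring}"
  proof (intro exI[of _ n] conjI bexI[of _ "gc e0"])
    show "n > 0" by (rule n)
    show "gc e0 \<in> carrier gps_ring" by (simp add: gps_ring_simps gc_carrier)
    show "gc e0 \<otimes>\<^bsub>gps_ring\<^esub> gc e0 = gc e0" by (simp add: gps_ring_simps gc_mult ee')
    show "r_ann gps_ring (set_pow gps_ring X n) = {gc e0 \<otimes>\<^bsub>gps_ring\<^esub> a | a. a \<in> carrier gps_ring}"
      using core by (simp only: r_ann_gps set_gps)
  qed
qed

lemma qbaer_RA:
  assumes Arm: "S_Armendariz TYPE('b) TYPE('a::ring_1)"
    and B: "gen_right_quasi_Baer (type_ring :: 'a ring)"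
  shows "gen_right_quasi_Baer (gps_ring :: ('b \<Rightarrow> 'a) ring)"
  unfolding gen_right_quasi_Baer_def
proof (intro allI impI)
  fix I :: "('b \<Rightarrow> 'a) set" assume RI: "right_ideal I gps_ring"
  have IC: "I \<subseteq> gps_carrier"
    using additive_subgroup.a_subset[of I gps_ring] RI unfolding right_ideal_def by (simp add: gps_ring_simps)
  have Imul: "\<forall>x\<in>I. \<forall>r\<in>gps_carrier. gps_mult x r \<in> I" using RI unfolding right_ideal_def by (simp add: gps_ring_simps)
  define C where "C = {f u | f u. f \<in> I}"
  define J where "J = aclos C"
  have CI: "\<forall>f\<in>I. \<forall>u. f u \<in> C" unfolding C_def by blast
  have Cmul: "c * r \<in> C" if cC: "c \<in> C" for c r
  proof -
    obtain f u where fu: "c = f u" "f \<in> I" using cC unfolding C_def by blast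
    have "gps_mult f (gc r) \<in> I" using Imul fu(2) gc_carrier by blast
    moreover have "gps_mult f (gc r) u = c * r" by (simp add: M_gc_right fu(1))
    ultimately have "\<exists>g v. c * r = g v \<and> g \<in> I"
      by (intro exI[of _ "gps_mult f (gc r)"] exI[of _ u] conjI) simp_all
    then show ?thesis unfolding C_def by (simp only: mem_Collect_eq)
  qed
  have Jmul: "x * r \<in> aclos C" if "x \<in> aclos C" for x r
    using that
  proof (induction x rule: aclos.induct)
    case aclos_zero then show ?case by (simp add: aclos.aclos_zero)
  next
    case (aclos_base c) then show ?case by (simp add: Cmul aclos.aclos_base)
  next
    case (aclos_add x y) then show ?case by (simp add: distrib_right aclos.aclos_add)
  next
    case (aclos_neg x) then show ?case by (simp add: aclos.aclos_neg)
  qed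
  have RJ: "right_ideal J type_ring"
    unfolding right_ideal_def
  proof
    show "additive_subgroup J type_ring" unfolding J_def
      by (rule addsub_typeI) (auto intro: aclos.intros)
    show "\<forall>x\<in>J. \<forall>r\<in>carrier type_ring. x \<otimes>\<^bsub>type_ring\<^esub> r \<in> J"
      unfolding J_def by (simp add: type_ring_simps Jmul)
  qed
  obtain n e0 where n: "n > 0" and ee: "e0 \<otimes>\<^bsub>type_ring\<^esub> e0 = e0"
    and ann: "r_ann type_ring (set_pow type_ring J n) = {e0 \<otimes>\<^bsub>type_ring\<^esub> a | a. a \<in> carrier type_ring}"
    using B[unfolded gen_right_quasi_Baer_def, rule_format, OF RJ] by blast
  obtain m where m: "n = Suc m" using n by (cases n) auto
  have annR: "{a. \<forall>x\<in>set_pow type_ring J n. x * a = 0} = {e0 * a | a. True}"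
    using ann by (simp only: r_ann_type set_type)
  have ee': "e0 * e0 = e0" using ee by (simp add: type_ring_simps)
  have PC: "set_pow gps_ring I n \<subseteq> gps_carrier" unfolding m by (rule pow_carrier[OF SOM IC])
  have h1: "\<forall>v. \<forall>x\<in>set_pow type_ring J n. x * g v = 0"
    if g: "g \<in> gps_carrier" "\<forall>p\<in>set_pow gps_ring I n. gps_mult p g = (\<lambda>s. 0)" for g
  proof (intro allI)
    fix v
    have g2: "\<forall>p\<in>set_pow gps_ring I (Suc m). gps_mult p g = (\<lambda>s. 0)" using g(2) m by simp
    have cz: "\<forall>c\<in>set_pow type_ring C (Suc m). c * g v = 0"
    proof
      fix c assume c: "c \<in> set_pow type_ring C (Suc m)"
      have c2: "c \<in> set_pow type_ring {f u | f u. f \<in> I} (Suc m)" using c C_def by simp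
      show "c * g v = 0" by (rule multi_arm[OF SOM Arm IC g(1) g2 c2])
    qed
    show "\<forall>x\<in>set_pow type_ring J n. x * g v = 0"
    proof
      fix x assume "x \<in> set_pow type_ring J n"
      then have "x \<in> set_pow type_ring (aclos C) (Suc m)" using m J_def by simp
      then show "x * g v = 0" by (rule Jext[OF cz])
    qed
  qed
  have e0ann: "\<forall>c\<in>set_pow type_ring C (Suc m). c * e0 = 0"
  proof -
    have "e0 \<in> {e0 * a | a. True}" by (rule CollectI, rule exI[of _ 1]) simp
    then have "e0 \<in> {a. \<forall>x\<in>set_pow type_ring J n. x * a = 0}" using annR by simp
    then have J0: "\<forall>c\<in>set_pow type_ring J (Suc m). c * e0 = 0" unfolding m by simp
    have "C \<subseteq> J" unfolding J_def by (auto intro: aclos.aclos_base)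
    then have "set_pow type_ring C (Suc m) \<subseteq> set_pow type_ring J (Suc m)" by (rule pow_mono)
    then show ?thesis using J0 by blast
  qed
  have h2: "p s * e0 = 0" if "p \<in> set_pow gps_ring I n" for p s
  proof -
    have "p \<in> set_pow gps_ring I (Suc m)" using that m by simp
    then show ?thesis by (rule coef_lemma[OF SOM CI e0ann])
  qed
  have core: "{g \<in> gps_carrier. \<forall>p\<in>set_pow gps_ring I n. gps_mult p g = (\<lambda>s. 0)} = {gps_mult (gc e0) a | a. a \<in> gps_carrier}"
  proof -
    have H1: "\<forall>g. g \<in> gps_carrier \<longrightarrow> (\<forall>p\<in>set_pow gps_ring I n. gps_mult p g = (\<lambda>s. 0)) \<longrightarrow> (\<forall>v. \<forall>x\<in>set_pow type_ring J n. x * g v = 0)"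
      using h1 by blast
    have H2: "\<forall>p\<in>set_pow gps_ring I n. \<forall>s. p s * e0 = 0" using h2 by blast
    show ?thesis by (rule R_to_A_core[OF PC annR ee' H1 H2])
  qed
  show "\<exists>n>0. \<exists>e\<in>carrier gps_ring. e \<otimes>\<^bsub>gps_ring\<^esub> e = e \<and>
      r_ann gps_ring (set_pow gps_ring I n) = {e \<otimes>\<^bsub>gps_ring\<^esub> a | a. a \<in> carrier gps_ring}"
  proof (intro exI[of _ n] conjI bexI[of _ "gc e0"])
    show "n > 0" by (rule n)
    show "gc e0 \<in> carrier gps_ring" by (simp add: gps_ring_simps gc_carrier)
    show "gc e0 \<otimes>\<^bsub>gps_ring\<^esub> gc e0 = gc e0" by (simp add: gps_ring_simps gc_mult ee')
    show "r_ann gps_ring (set_pow gps_ring I n) = {gc e0 \<otimes>\<^bsub>gps_ring\<^esub> a | a. a \<in> carrier gps_ring}"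
      using core by (simp only: r_ann_gps set_gps)
  qed
qed

lemma qbaer_AR:
  assumes Arm: "S_Armendariz TYPE('b) TYPE('a::ring_1)"
    and B: "gen_right_quasi_Baer (gps_ring :: ('b \<Rightarrow> 'a) ring)"
  shows "gen_right_quasi_Baer (type_ring :: 'a ring)"
  unfolding gen_right_quasi_Baer_def
proof (intro allI impI)
  fix J :: "'a set" assume RJ: "right_ideal J type_ring"
  have AS: "additive_subgroup J type_ring" using RJ unfolding right_ideal_def by blast
  note JD = addsub_typeD[OF AS]
  have Jmul: "\<forall>x\<in>J. \<forall>r. x * r \<in> J" using RJ unfolding right_ideal_def by (simp add: type_ring_simps)
  define I where "I = {f \<in> gps_carrier. \<forall>u. (f :: 'b \<Rightarrow> 'a) u \<in> J}"
  have IJ: "\<forall>f\<in>I. \<forall>u. f u \<in> J" unfolding I_def by blast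
  have IC: "I \<subseteq> gps_carrier" unfolding I_def by blast
  have RI: "right_ideal I gps_ring"
    unfolding right_ideal_def
  proof
    show "additive_subgroup I gps_ring"
    proof (rule addsub_gps)
      show "I \<subseteq> gps_carrier" by (rule IC)
      show "(\<lambda>s. 0) \<in> I" using JD(1) zero_carrier by (simp add: I_def)
      show "\<forall>x\<in>I. \<forall>y\<in>I. (\<lambda>s. x s + y s) \<in> I" using JD(2) by (simp add: I_def add_carrier)
      show "\<forall>x\<in>I. (\<lambda>s. - x s) \<in> I" using JD(3) by (simp add: I_def neg_carrier)
    qed
    show "\<forall>x\<in>I. \<forall>r\<in>carrier gps_ring. x \<otimes>\<^bsub>gps_ring\<^esub> r \<in> I"
    proof (intro ballI)
      fix x r :: "'b \<Rightarrow> 'a" assume x: "x \<in> I" and r: "r \<in> carrier gps_ring"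
      have xC: "x \<in> gps_carrier" "r \<in> gps_carrier" using x r by (simp_all add: I_def gps_ring_simps)
      have "gps_mult x r u \<in> J" for u
        unfolding gps_mult_def
      proof (rule sum_in[OF JD(1) JD(2)])
        show "\<forall>i\<in>{(a, b). a * b = u \<and> x a \<noteq> 0 \<and> r b \<noteq> 0}. (case i of (a, b) \<Rightarrow> x a * r b) \<in> J"
        proof
          fix i assume "i \<in> {(a, b). a * b = u \<and> x a \<noteq> 0 \<and> r b \<noteq> 0}"
          obtain a b where i: "i = (a, b)" by fastforce
          have "x a \<in> J" using x IJ by blast
          then have "x a * r b \<in> J" using Jmul by blast
          then show "(case i of (a, b) \<Rightarrow> x a * r b) \<in> J" by (simp add: i)
        qed
      qed
      then show "x \<otimes>\<^bsub>gps_ring\<^esub> r \<in> I" using M_closed[OF SOM xC] by (simp add: I_def gps_ring_simps)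
    qed
  qed
  obtain n e where n: "n > 0" and eC: "e \<in> carrier gps_ring" and ee: "e \<otimes>\<^bsub>gps_ring\<^esub> e = e"
    and ann: "r_ann gps_ring (set_pow gps_ring I n) = {e \<otimes>\<^bsub>gps_ring\<^esub> a | a. a \<in> carrier gps_ring}"
    using B[unfolded gen_right_quasi_Baer_def, rule_format, OF RI] by blast
  obtain m where m: "n = Suc m" using n by (cases n) auto
  have eC': "e \<in> gps_carrier" using eC by (simp add: gps_ring_simps)
  have ee': "gps_mult e e = e" using ee by (simp add: gps_ring_simps)
  have annA: "{g \<in> gps_carrier. \<forall>p\<in>set_pow gps_ring I n. gps_mult p g = (\<lambda>s. 0)}
     = {gps_mult e a | a. a \<in> gps_carrier}"
    using ann by (simp only: r_ann_gps set_gps)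
  have h1: "\<forall>p\<in>set_pow gps_ring I n. gps_mult p (gc a) = (\<lambda>s. 0)"
    if a: "\<forall>x\<in>set_pow type_ring J n. x * a = 0" for a
  proof
    fix p assume p: "p \<in> set_pow gps_ring I n"
    have a2: "\<forall>x\<in>set_pow type_ring J (Suc m). x * a = 0" using a m by simp
    have p2: "p \<in> set_pow gps_ring I (Suc m)" using p m by simp
    have "p s * a = 0" for s by (rule coef_lemma[OF SOM IJ a2 p2])
    then show "gps_mult p (gc a) = (\<lambda>s. 0)" by (simp add: M_gc_right)
  qed
  have h2: "gc x \<in> set_pow gps_ring I n" if x: "x \<in> set_pow type_ring J n" for x
  proof -
    have "gc ` J \<subseteq> I" using JD(1) gc_carrier by (auto simp: I_def gc_def)
    then have "set_pow gps_ring (gc ` J) (Suc m) \<subseteq> set_pow gps_ring I (Suc m)" by (rule pow_mono)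
    moreover have "gc x \<in> set_pow gps_ring (gc ` J :: ('b \<Rightarrow> 'a) set) (Suc m)"
      using x m pow_gc[OF SOM, of J m] by simp
    ultimately have "gc x \<in> set_pow gps_ring I (Suc m)" by (rule subsetD)
    then show ?thesis unfolding m .
  qed
  note core = A_to_R_core[OF Arm eC' ee' annA h1 h2]
  show "\<exists>n>0. \<exists>e\<in>carrier type_ring. e \<otimes>\<^bsub>type_ring\<^esub> e = e \<and>
      r_ann type_ring (set_pow type_ring J n) = {e \<otimes>\<^bsub>type_ring\<^esub> a | a. a \<in> carrier type_ring}"
  proof (intro exI[of _ n] conjI bexI[of _ "e 1"])
    show "n > 0" by (rule n)
    show "e 1 \<in> carrier type_ring" by (simp add: type_ring_simps)
    show "e 1 \<otimes>\<^bsub>type_ring\<^esub> e 1 = e 1" using core(1) by (simp add: type_ring_simps)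
    show "r_ann type_ring (set_pow type_ring J n) = {e 1 \<otimes>\<^bsub>type_ring\<^esub> a | a. a \<in> carrier type_ring}"
      using core(2) by (simp only: r_ann_type set_type)
  qed
qed

end

theorem corollary3p8:
  assumes "strictly_ordered_monoid TYPE('b::{monoid_mult,order})"
      and "quasitotally_ordered TYPE('b)"
      and "S_Armendariz TYPE('b) TYPE('a::ring_1)"
  shows "(gen_right_Baer (gps_ring :: ('b \<Rightarrow> 'a) ring) \<longleftrightarrow> gen_right_Baer (type_ring :: 'a ring))
       \<and> (gen_right_quasi_Baer (gps_ring :: ('b \<Rightarrow> 'a) ring) \<longleftrightarrow> gen_right_quasi_Baer (type_ring :: 'a ring))"
proof (intro conjI iffI)
  assume "gen_right_Baer (gps_ring :: ('b \<Rightarrow> 'a) ring)"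
  then show "gen_right_Baer (type_ring :: 'a ring)" by (rule baer_AR[OF assms(1,3)])
next
  assume "gen_right_Baer (type_ring :: 'a ring)"
  then show "gen_right_Baer (gps_ring :: ('b \<Rightarrow> 'a) ring)" by (rule baer_RA[OF assms(1,3)])
next
  assume "gen_right_quasi_Baer (gps_ring :: ('b \<Rightarrow> 'a) ring)"
  then show "gen_right_quasi_Baer (type_ring :: 'a ring)" by (rule qbaer_AR[OF assms(1,3)])
next
  assume "gen_right_quasi_Baer (type_ring :: 'a ring)"
  then show "gen_right_quasi_Baer (gps_ring :: ('b \<Rightarrow> 'a) ring)" by (rule qbaer_RA[OF assms(1,3)])
qed



end
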